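(* Let $q$ be a power of an odd prime with $q\equiv1\pmod 4$, $t=\frac{q-1}{4}$, $T$ a generator of $\widehat{\mathbb F_q^{\times}}$, and $\lambda\in\mathbb F_q$ with $\lambda^4=1$. Then $$\frac{3}{q-1}\sum_{j=0}^{q-2}\frac{g(T^{j})^2\,g(T^{2t+j})^2}{g(T^{4j})}\,T^{4j}(4\lambda)=-6q+3q\,T^t(-1).$$
   Context: Characters are extended by $\chi(0)=0$. With $\mathrm{tr}:\mathbb F_q\to\mathbb F_p$ the trace, $\zeta$ a fixed primitive $p$-th root of unity and $\theta(x)=\zeta^{\mathrm{tr}(x)}$, the Gauss sum is $g(\chi)=\sum_{x\in\mathbb F_q}\chi(x)\theta(x)$ (so $g$ of the trivial character is $-1$). *)

theory Defs
  imports "HOL-Computational_Algebra.Computational_Algebra" "HOL-Library.Cardinality" Complex_Main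
begin

definition ff_degree :: "'a::{finite,field} itself \<Rightarrow> nat" where
  "ff_degree t = (THE n. card (UNIV :: 'a set) = semiring_char t ^ n)"

text \<open>Absolute trace F_q \<rightarrow> F_p, valued in the prime subfield of F_q.\<close>
definition ff_trace :: "'a::{finite,field} \<Rightarrow> 'a" where
  "ff_trace x = (\<Sum>i<ff_degree TYPE('a). x ^ (CHAR('a) ^ i))"

text \<open>The trace as a residue in {0..p-1} (identifying F_p with Z/pZ).\<close>
definition ff_trace_nat :: "'a::{finite,field} \<Rightarrow> nat" where
  "ff_trace_nat x = (THE k. k < CHAR('a) \<and> of_nat k = ff_trace x)"

definition add_char :: "complex \<Rightarrow> 'a::{finite,field} \<Rightarrow> complex" where
  "add_char \<zeta> x = \<zeta> ^ ff_trace_nat x"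

definition prim_root_unity :: "nat \<Rightarrow> complex \<Rightarrow> bool" where
  "prim_root_unity p \<zeta> \<longleftrightarrow> \<zeta> ^ p = 1 \<and> (\<forall>k. 0 < k \<and> k < p \<longrightarrow> \<zeta> ^ k \<noteq> 1)"

definition mult_char :: "('a::{finite,field} \<Rightarrow> complex) \<Rightarrow> bool" where
  "mult_char \<chi> \<longleftrightarrow> \<chi> 0 = 0 \<and> \<chi> 1 = 1 \<and>
     (\<forall>x y. x \<noteq> 0 \<longrightarrow> y \<noteq> 0 \<longrightarrow> \<chi> (x * y) = \<chi> x * \<chi> y)"

text \<open>Power chi^j in the character group, extended by 0 at 0 (so chi^0 is the trivial character with value 0 at 0).\<close>
definition char_pow :: "('a::{finite,field} \<Rightarrow> complex) \<Rightarrow> nat \<Rightarrow> 'a \<Rightarrow> complex" where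
  "char_pow \<chi> j x = (if x = 0 then 0 else \<chi> x ^ j)"

definition char_generator :: "('a::{finite,field} \<Rightarrow> complex) \<Rightarrow> bool" where
  "char_generator T \<longleftrightarrow> mult_char T \<and> (\<forall>\<chi>. mult_char \<chi> \<longrightarrow> (\<exists>j. \<chi> = char_pow T j))"

definition gauss_sum :: "complex \<Rightarrow> ('a::{finite,field} \<Rightarrow> complex) \<Rightarrow> complex" where
  "gauss_sum \<zeta> \<chi> = (\<Sum>x\<in>UNIV. \<chi> x * add_char \<zeta> x)"

end

theory Submission
  imports Defs "HOL-Algebra.Multiplicative_Group"
begin

lemma ff_CHAR_prime: "prime CHAR('a::{finite,field})"
  by (rule prime_CHAR_semidom) (rule finite_imp_CHAR_pos, simp)

lemma ff_CHAR_inv: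
  assumes "\<not> CHAR('a::{finite,field}) dvd m"
  shows "\<exists>x. (of_nat m :: 'a) * of_nat x = 1"
proof -
  let ?p = "CHAR('a)"
  have pr: "prime ?p" by (rule ff_CHAR_prime)
  have m0: "m \<noteq> 0" using assms by (metis dvd_0_right)
  have "coprime m ?p" using assms pr
    by (metis coprime_commute prime_imp_coprime)
  hence g: "gcd m ?p = 1" by simp
  obtain x y where "m * x = ?p * y + gcd m ?p" using bezout_nat[OF m0] by blast
  hence "m * x = ?p * y + 1" using g by simp
  hence "(of_nat (m * x) :: 'a) = of_nat (?p * y + 1)" by simp
  hence "(of_nat m :: 'a) * of_nat x = 1" by simp
  thus ?thesis by blast
qed

definition subsp :: "'a::field set \<Rightarrow> bool" where
  "subsp S \<longleftrightarrow> 0 \<in> S \<and> (\<forall>x\<in>S. \<forall>y\<in>S. x + y \<in> S) \<and> (\<forall>x\<in>S. \<forall>k. of_nat k * x \<in> S)"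

lemma subsp_extend:
  fixes S :: "'a::{finite,field} set"
  assumes S: "subsp S" and v: "v \<notin> S"
  defines "S' \<equiv> {s + of_nat k * v | s k. s \<in> S}"
  shows "subsp S'" "card S' = CHAR('a) * card S" "S \<subseteq> S'" "v \<in> S'"
proof -
  let ?p = "CHAR('a)"
  have p0: "?p > 0" using ff_CHAR_prime[where 'a='a] prime_gt_0_nat by blast
  have S0: "0 \<in> S" and Sadd: "\<And>x y. x \<in> S \<Longrightarrow> y \<in> S \<Longrightarrow> x + y \<in> S"
    and Smul: "\<And>x k. x \<in> S \<Longrightarrow> of_nat k * x \<in> S" using S unfolding subsp_def by auto
  have Sneg: "- x \<in> S" if "x \<in> S" for x
  proof -
    have "(of_nat (?p - 1) :: 'a) = of_nat ?p - 1" using p0 by (simp add: of_nat_diff)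
    hence "(of_nat (?p - 1) :: 'a) = - 1" by simp
    thus ?thesis using Smul[OF that, of "?p - 1"] by simp
  qed
  show "S \<subseteq> S'"
  proof
    fix x assume "x \<in> S"
    hence "x = x + of_nat 0 * v \<and> x \<in> S" by simp
    thus "x \<in> S'" unfolding S'_def by blast
  qed
  show "v \<in> S'"
  proof -
    have "v = 0 + of_nat 1 * v \<and> (0::'a) \<in> S" using S0 by simp
    thus ?thesis unfolding S'_def by blast
  qed
  show "subsp S'" unfolding subsp_def
  proof (intro conjI ballI allI)
    have "(0::'a) = 0 + of_nat 0 * v \<and> (0::'a) \<in> S" using S0 by simp
    thus "0 \<in> S'" unfolding S'_def by blast
  next
    fix x y assume "x \<in> S'" "y \<in> S'"
    then obtain s k s' k' where "x = s + of_nat k * v" "s \<in> S" "y = s' + of_nat k' * v" "s' \<in> S"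
      unfolding S'_def by blast
    thus "x + y \<in> S'" unfolding S'_def using Sadd
      by (auto intro!: exI[of _ "s + s'"] exI[of _ "k + k'"] simp: algebra_simps)
  next
    fix x j assume "x \<in> S'"
    then obtain s k where "x = s + of_nat k * v" "s \<in> S"
      unfolding S'_def by blast
    thus "of_nat j * x \<in> S'" unfolding S'_def using Smul
      by (auto intro!: exI[of _ "of_nat j * s"] exI[of _ "j * k"] simp: algebra_simps)
  qed
  have eqU: "S' = (\<Union>k\<in>{..<?p}. (\<lambda>s. s + of_nat k * v) ` S)"
  proof
    show "S' \<subseteq> (\<Union>k\<in>{..<?p}. (\<lambda>s. s + of_nat k * v) ` S)"
    proof
      fix x assume "x \<in> S'"
      then obtain s k where x: "x = s + of_nat k * v" "s \<in> S" unfolding S'_def by blast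
      have "(of_nat k :: 'a) = of_nat (k mod ?p)"
      proof -
        have "(of_nat k :: 'a) = of_nat (k mod ?p + ?p * (k div ?p))" by (simp only: mod_mult_div_eq)
        also have "\<dots> = of_nat (k mod ?p)" unfolding of_nat_add of_nat_mult of_nat_CHAR by (simp only: mult_zero_left add_0_right)
        finally show ?thesis .
      qed
      thus "x \<in> (\<Union>k\<in>{..<?p}. (\<lambda>s. s + of_nat k * v) ` S)"
        using x p0 by auto
    qed
  next
    show "(\<Union>k\<in>{..<?p}. (\<lambda>s. s + of_nat k * v) ` S) \<subseteq> S'" unfolding S'_def by blast
  qed
  have disj: "(\<lambda>s. s + of_nat k * v) ` S \<inter> (\<lambda>s. s + of_nat k' * v) ` S = {}"
    if "k < ?p" "k' < ?p" "k \<noteq> k'" for k k'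
  proof (rule ccontr)
    assume "\<not> ?thesis"
    then obtain s s' where ss: "s \<in> S" "s' \<in> S" "s + of_nat k * v = s' + of_nat k' * v" by auto
    have gen: False if "a < b" "b < ?p" "t \<in> S" "t' \<in> S" "t + of_nat a * v = t' + of_nat b * v" for a b t t'
    proof -
      have "(of_nat b :: 'a) = of_nat a + of_nat (b - a)" using that(1) by (simp add: of_nat_diff)
      hence "of_nat (b - a) * v = t - t'" using that(5) by (simp add: algebra_simps)
      moreover have "\<not> ?p dvd (b - a)"
      proof
        assume "?p dvd (b - a)"
        hence "?p \<le> b - a" using that(1) by (intro dvd_imp_le) auto
        thus False using that(2) by linarith
      qed
      then obtain x where x: "(of_nat (b - a) :: 'a) * of_nat x = 1" using ff_CHAR_inv by blast
      ultimately have "v = of_nat x * (t - t')"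
        by (metis mult.assoc mult.commute mult_1)
      moreover have "t - t' \<in> S" using Sadd[OF that(3) Sneg[OF that(4)]] by simp
      ultimately have "v \<in> S" using Smul by simp
      thus False using v by simp
    qed
    show False
    proof (cases "k < k'")
      case True thus ?thesis using gen[OF True that(2) ss] by blast
    next
      case False hence "k' < k" using that(3) by simp
      thus ?thesis using gen[OF _ that(1) ss(2,1)] ss(3) by metis
    qed
  qed
  have "card S' = (\<Sum>k\<in>{..<?p}. card ((\<lambda>s. s + of_nat k * v) ` S))"
    unfolding eqU by (rule card_UN_disjoint) (use disj in auto)
  also have "\<dots> = (\<Sum>k\<in>{..<?p}. card S)"
    by (intro sum.cong refl card_image) (auto simp: inj_on_def)
  finally show "card S' = ?p * card S" by simp
qed

lemma ff_card_prime_power: "\<exists>n. CARD('a::{finite,field}) = CHAR('a) ^ n"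
proof -
  let ?p = "CHAR('a)"
  have p2: "?p \<ge> 2" using ff_CHAR_prime[where 'a='a] prime_ge_2_nat by blast
  have main: "subsp S \<Longrightarrow> card S = ?p ^ n \<Longrightarrow> \<exists>n. CARD('a) = ?p ^ n" for S :: "'a set" and n
  proof (induct "CARD('a) - card S" arbitrary: S n rule: less_induct)
    case less
    show ?case
    proof (cases "S = UNIV")
      case True thus ?thesis using less by auto
    next
      case False
      then obtain v where v: "v \<notin> S" by auto
      define S' where "S' = {s + of_nat k * v | s k. s \<in> S}"
      note ext = subsp_extend[OF less(2) v, folded S'_def]
      have "card S < card S'" using ext(2) p2 less(3)
        by simp
      moreover have "card S' \<le> CARD('a)" by (rule card_mono) auto
      ultimately have "CARD('a) - card S' < CARD('a) - card S" by linarith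
      thus ?thesis using less(1)[of S' "Suc n"] ext less(3) by simp
    qed
  qed
  have "subsp ({0} :: 'a set)" unfolding subsp_def by auto
  thus ?thesis using main[of "{0}" 0] by simp
qed


lemma ff_pow_card_minus1:
  fixes x :: "'a::{finite,field}"
  assumes "x \<noteq> 0"
  shows "x ^ (CARD('a) - 1) = 1"
proof -
  have q1: "CARD('a) \<ge> 2"
  proof -
    have "{0, 1::'a} \<subseteq> UNIV" by simp
    hence "card {0, 1::'a} \<le> CARD('a)" by (intro card_mono) auto
    thus ?thesis by simp
  qed
  have "(\<Prod>y\<in>UNIV-{0}. x * y) = x ^ card (UNIV - {0::'a}) * \<Prod>(UNIV-{0::'a})"
    by (simp add: prod.distrib)
  also have "card (UNIV - {0::'a}) = CARD('a) - 1" by (simp add: card_Diff_subset)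
  also have "(\<Prod>y\<in>UNIV-{0}. x * y) = (\<Prod>y\<in>UNIV-{0}. y)"
    by (rule prod.reindex_bij_witness[of _ "\<lambda>y. y / x" "\<lambda>y. x * y"]) (use assms in auto)
  finally have "x ^ (CARD('a) - 1) * \<Prod>(UNIV-{0::'a}) = 1 * \<Prod>(UNIV-{0::'a})" by simp
  moreover have "\<Prod>(UNIV-{0::'a}) \<noteq> 0" by (subst prod_zero_iff) auto
  ultimately show ?thesis by (simp only: mult_cancel_right) simp
qed

lemma ff_pow_card:
  fixes x :: "'a::{finite,field}"
  shows "x ^ CARD('a) = x"
proof (cases "x = 0")
  case True thus ?thesis by simp
next
  case False
  have "CARD('a) = Suc (CARD('a) - 1)" using finite_UNIV_card_ge_0[where 'a='a] by simp
  hence "x ^ CARD('a) = x * x ^ (CARD('a) - 1)" by (metis power_Suc)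
  thus ?thesis using ff_pow_card_minus1[OF False] by simp
qed

lemma ff_degree_eq: "CARD('a::{finite,field}) = CHAR('a) ^ ff_degree TYPE('a)"
proof -
  have p2: "CHAR('a) \<ge> 2" using ff_CHAR_prime[where 'a='a] prime_ge_2_nat by blast
  obtain n where n: "CARD('a) = CHAR('a) ^ n" using ff_card_prime_power by blast
  have "ff_degree TYPE('a) = n" unfolding ff_degree_def
  proof (rule the_equality)
    show "CARD('a) = semiring_char TYPE('a) ^ n" using n by simp
  next
    fix m assume "CARD('a) = semiring_char TYPE('a) ^ m"
    hence "CHAR('a) ^ m = CHAR('a) ^ n" using n by simp
    thus "m = n" using p2 by (simp add: power_inject_exp)
  qed
  thus ?thesis using n by simp
qed

lemma ff_degree_pos: "ff_degree TYPE('a::{finite,field}) > 0"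
proof (rule ccontr)
  assume "\<not> ?thesis"
  hence "CARD('a) = 1" using ff_degree_eq[where 'a='a] by simp
  moreover have "card {0, 1::'a} \<le> CARD('a)" by (intro card_mono) auto
  ultimately show False by simp
qed

lemma ff_pow_CHAR_pow:
  fixes x :: "'a::{finite,field}"
  shows "x ^ (CHAR('a) ^ ff_degree TYPE('a)) = x"
  using ff_pow_card[of x] ff_degree_eq[where 'a='a] by simp

lemma ff_trace_add: "ff_trace (x + y :: 'a::{finite,field}) = ff_trace x + ff_trace y"
  unfolding ff_trace_def
  by (simp add: freshmans_dream'[OF ff_CHAR_prime refl] sum.distrib)

lemma ff_trace_pow: "ff_trace (x :: 'a::{finite,field}) ^ CHAR('a) = ff_trace x"
proof -
  let ?p = "CHAR('a)" and ?n = "ff_degree TYPE('a)"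
  define f where "f i = x ^ (?p ^ i)" for i
  have "ff_trace x ^ ?p = (\<Sum>i<?n. f i ^ ?p)"
    unfolding ff_trace_def f_def by (rule freshmans_dream_sum[OF ff_CHAR_prime refl])
  also have "\<dots> = (\<Sum>i<?n. f (Suc i))" by (simp add: f_def power_mult[symmetric] mult.commute)
  also have "\<dots> = (\<Sum>i<?n. f i) + f ?n - f 0"
  proof -
    have "(\<Sum>i<Suc ?n. f i) = f 0 + (\<Sum>i<?n. f (Suc i))" by (rule sum.lessThan_Suc_shift)
    moreover have "(\<Sum>i<Suc ?n. f i) = (\<Sum>i<?n. f i) + f ?n" by (rule sum.lessThan_Suc)
    ultimately show ?thesis by (simp add: algebra_simps)
  qed
  also have "f ?n = f 0" unfolding f_def using ff_pow_CHAR_pow[of x] by simp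
  finally show ?thesis unfolding ff_trace_def f_def by simp
qed

lemma of_nat_pow_CHAR: "(of_nat k :: 'a::{finite,field}) ^ CHAR('a) = of_nat k"
proof (induct k)
  case 0 thus ?case using ff_CHAR_prime[where 'a='a] by (simp add: prime_gt_0_nat)
next
  case (Suc k)
  have e: "(of_nat (Suc k) :: 'a) = of_nat k + 1" by simp
  have "(of_nat (Suc k) :: 'a) ^ CHAR('a) = (of_nat k + 1) ^ CHAR('a)" by (simp only: e)
  also have "\<dots> = of_nat k ^ CHAR('a) + 1 ^ CHAR('a)"
    by (rule freshmans_dream[OF ff_CHAR_prime refl])
  finally show ?case using Suc e by simp
qed

lemma of_nat_inj_CHAR:
  assumes "a < CHAR('a::{finite,field})" "b < CHAR('a)" "(of_nat a :: 'a) = of_nat b"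
  shows "a = b"
proof (rule ccontr)
  have gen: False if "x < y" "y < CHAR('a)" "(of_nat x :: 'a) = of_nat y" for x y
  proof -
    have "(of_nat y :: 'a) = of_nat x + of_nat (y - x)" using that(1) by (simp add: of_nat_diff)
    hence "(of_nat (y - x) :: 'a) = 0" using that(3) by simp
    hence "CHAR('a) dvd (y - x)" by (simp add: of_nat_eq_0_iff_char_dvd)
    hence "CHAR('a) \<le> y - x" using that(1) by (intro dvd_imp_le) auto
    thus False using that(2) by linarith
  qed
  assume "a \<noteq> b"
  thus False using gen[of a b] gen[of b a] assms by (cases "a < b") auto
qed

lemma prime_field_elem:
  fixes y :: "'a::{finite,field}"
  assumes "y ^ CHAR('a) = y"
  shows "\<exists>k<CHAR('a). of_nat k = y"
proof -
  let ?p = "CHAR('a)"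
  have p2: "?p \<ge> 2" using ff_CHAR_prime[where 'a='a] prime_ge_2_nat by blast
  define P :: "'a poly" where "P = Polynomial.monom 1 ?p - [:0, 1:]"
  obtain m where pm: "?p = Suc (Suc m)" using p2 by (metis add_2_eq_Suc le_Suc_ex)
  have coeffP: "Polynomial.coeff P ?p = 1" by (simp add: P_def pm)
  hence P0: "P \<noteq> 0" by auto
  have degP: "degree P \<le> ?p"
    unfolding P_def by (rule degree_diff_le) (auto simp: degree_monom_le intro: order.trans[OF _ p2])
  have polyP: "poly P x = x ^ ?p - x" for x by (simp add: P_def poly_monom)
  have sub: "of_nat ` {..<?p} \<subseteq> {x. poly P x = 0}" by (auto simp: polyP of_nat_pow_CHAR)
  have inj: "inj_on (of_nat :: nat \<Rightarrow> 'a) {..<?p}"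
    by (auto simp: inj_on_def intro: of_nat_inj_CHAR)
  have "card {x. poly P x = 0} \<le> ?p" using card_poly_roots_bound[OF P0] degP by linarith
  moreover have "card (of_nat ` {..<?p} :: 'a set) = ?p" using card_image[OF inj] by simp
  moreover have "card (of_nat ` {..<?p} :: 'a set) \<le> card {x. poly P x = 0}"
    using sub by (intro card_mono) auto
  ultimately have "of_nat ` {..<?p} = {x. poly P x = (0::'a)}"
    using sub by (intro card_subset_eq) auto
  moreover have "y \<in> {x. poly P x = 0}" using assms by (simp add: polyP)
  ultimately have "y \<in> of_nat ` {..<?p}" by simp
  thus ?thesis by auto
qed

lemma ff_trace_nat:
  fixes x :: "'a::{finite,field}"
  shows "ff_trace_nat x < CHAR('a) \<and> of_nat (ff_trace_nat x) = ff_trace x"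
  unfolding ff_trace_nat_def
proof (rule theI')
  show "\<exists>!k. k < CHAR('a) \<and> of_nat k = ff_trace x"
    using prime_field_elem[OF ff_trace_pow[of x]] of_nat_inj_CHAR by metis
qed

lemma pow_eq_of_nat_CHAR:
  fixes \<zeta> :: complex
  assumes "\<zeta> ^ CHAR('a::{finite,field}) = 1" "(of_nat a :: 'a) = of_nat b"
  shows "\<zeta> ^ a = \<zeta> ^ b"
proof -
  let ?p = "CHAR('a)"
  have p0: "?p > 0" using ff_CHAR_prime[where 'a='a] prime_gt_0_nat by blast
  have red: "\<zeta> ^ m = \<zeta> ^ (m mod ?p)" for m
  proof -
    have "\<zeta> ^ m = \<zeta> ^ (m mod ?p + ?p * (m div ?p))" by (simp only: mod_mult_div_eq)
    also have "\<dots> = \<zeta> ^ (m mod ?p)" by (simp only: power_add power_mult assms(1) power_one mult_1_right)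
    finally show ?thesis .
  qed
  have ofred: "(of_nat m :: 'a) = of_nat (m mod ?p)" for m
  proof -
    have "(of_nat m :: 'a) = of_nat (m mod ?p + ?p * (m div ?p))" by (simp only: mod_mult_div_eq)
    also have "\<dots> = of_nat (m mod ?p)" unfolding of_nat_add of_nat_mult of_nat_CHAR
      by (simp only: mult_zero_left add_0_right)
    finally show ?thesis .
  qed
  have "a mod ?p = b mod ?p"
    using assms(2) ofred[of a] ofred[of b] p0 by (intro of_nat_inj_CHAR) auto
  thus ?thesis using red[of a] red[of b] by simp
qed

lemma ff_trace_nonzero: "\<exists>x::'a::{finite,field}. ff_trace x \<noteq> 0"
proof (rule ccontr)
  assume "\<not> ?thesis"
  hence z: "ff_trace x = 0" for x :: 'a by auto
  let ?p = "CHAR('a)" and ?n = "ff_degree TYPE('a)"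
  have p2: "?p \<ge> 2" using ff_CHAR_prime[where 'a='a] prime_ge_2_nat by blast
  have n0: "?n > 0" by (rule ff_degree_pos)
  define P :: "'a poly" where "P = (\<Sum>i<?n. Polynomial.monom 1 (?p ^ i))"
  have polyP: "poly P x = ff_trace x" for x
    by (simp add: P_def poly_sum poly_monom ff_trace_def)
  have "Polynomial.coeff P (?p ^ (?n - 1)) = (\<Sum>i<?n. if i = ?n - 1 then 1 else 0)"
    unfolding P_def coeff_sum coeff_monom using p2 by (intro sum.cong refl) (simp add: power_inject_exp)
  also have "\<dots> = 1" using n0 by simp
  finally have "P \<noteq> 0" by auto
  hence "card {x. poly P x = 0} \<le> degree P" by (rule card_poly_roots_bound)
  also have "degree P \<le> ?p ^ (?n - 1)"
    unfolding P_def using p2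
    by (intro degree_sum_le) (auto intro: order.trans[OF degree_monom_le] simp: power_increasing)
  also have "\<dots> < ?p ^ ?n" using p2 n0 by (intro power_strict_increasing) auto
  also have "\<dots> = CARD('a)" using ff_degree_eq[where 'a='a] by simp
  finally show False using z polyP by simp
qed


definition Rc :: "'a::field ring" where
  "Rc = \<lparr>carrier = UNIV, monoid.mult = (\<lambda>x y. x * y), one = 1, ring.zero = 0, add = (\<lambda>x y. x + y)\<rparr>"

lemma field_Rc: "field (Rc :: 'a::field ring)"
proof -
  have "\<exists>y. x + y = 0" for x :: 'a
    using add.right_inverse by blast
  moreover have "x \<noteq> 0 \<Longrightarrow> \<exists>y. x * y = 1" for x :: 'a
    by (rule exI[of _ "inverse x"]) auto
  ultimately show ?thesis
    unfolding Rc_def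
    by unfold_locales (auto simp: algebra_simps Units_def)
qed

lemma Rc_pow: "x [^]\<^bsub>(Rc :: 'a::field ring)\<^esub> (n::nat) = x ^ n"
  by (induct n) (simp_all add: Rc_def mult.commute)

lemma ff_generator: "\<exists>a::'a::{finite,field}. a \<noteq> 0 \<and> (\<forall>x. x \<noteq> 0 \<longrightarrow> (\<exists>i. x = a ^ i))"
proof -
  have F: "field (Rc :: 'a ring)" by (rule field_Rc)
  have car: "carrier (Rc :: 'a ring) = UNIV" by (simp add: Rc_def)
  have z: "\<zero>\<^bsub>(Rc :: 'a ring)\<^esub> = 0" by (simp add: Rc_def)
  have "finite (carrier (Rc :: 'a ring))" by (simp only: car finite_class.finite_UNIV)
  from field.finite_field_mult_group_has_gen[OF F this]
  obtain a where a: "a \<in> carrier (mult_of (Rc :: 'a ring))"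
    "carrier (mult_of (Rc :: 'a ring)) = {a [^]\<^bsub>Rc\<^esub> i | i::nat. i \<in> UNIV}" ..
  have cm: "carrier (mult_of (Rc :: 'a ring)) = UNIV - {0}" by (simp only: carrier_mult_of car z)
  have pw: "a [^]\<^bsub>(Rc :: 'a ring)\<^esub> (i::nat) = a ^ i" for i
    by (simp only: Rc_pow)
  have "a \<noteq> 0" using a(1) cm by blast
  moreover have "\<exists>i. x = a ^ i" if "x \<noteq> 0" for x :: 'a
  proof -
    have "x \<in> {a [^]\<^bsub>Rc\<^esub> i | i::nat. i \<in> UNIV}" using that a(2) cm by blast
    then obtain i :: nat where "x = a [^]\<^bsub>Rc\<^esub> i" by blast
    thus ?thesis using pw by metis
  qed
  ultimately show ?thesis by blast
qed

lemma ff_gen_order: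
  fixes a :: "'a::{finite,field}"
  assumes a0: "a \<noteq> 0" and gen: "\<And>x. x \<noteq> 0 \<Longrightarrow> \<exists>i. x = a ^ i"
  shows "a ^ m = 1 \<longleftrightarrow> (CARD('a) - 1) dvd m"
proof -
  let ?N = "CARD('a) - 1"
  have N0: "?N > 0"
  proof -
    have "card {0, 1::'a} \<le> CARD('a)" by (intro card_mono) auto
    thus ?thesis by simp
  qed
  have aN: "a ^ ?N = 1" using ff_pow_card_minus1[OF a0] .
  define d where "d = (LEAST d. d > 0 \<and> a ^ d = 1)"
  have d: "d > 0 \<and> a ^ d = 1" unfolding d_def by (rule LeastI[of _ ?N]) (use N0 aN in auto)
  have dmin: "\<not> (e > 0 \<and> a ^ e = 1)" if "e < d" for e
    using that unfolding d_def by (rule not_less_Least)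
  have dle: "d \<le> ?N" unfolding d_def by (rule Least_le) (use N0 aN in auto)
  have red: "a ^ i = a ^ (i mod d)" for i
  proof -
    have "a ^ i = a ^ (i mod d + d * (i div d))" by (simp only: mod_mult_div_eq)
    also have "\<dots> = a ^ (i mod d)" using d by (simp only: power_add power_mult power_one mult_1_right)
    finally show ?thesis .
  qed
  have "UNIV - {0} \<subseteq> (\<lambda>i. a ^ i) ` {..<d}"
  proof
    fix x :: 'a assume "x \<in> UNIV - {0}"
    then obtain i where "x = a ^ i" using gen by auto
    hence "x = a ^ (i mod d)" using red by simp
    moreover have "i mod d < d" using d by simp
    ultimately show "x \<in> (\<lambda>i. a ^ i) ` {..<d}" by auto
  qed
  hence "card (UNIV - {0::'a}) \<le> card ((\<lambda>i. a ^ i) ` {..<d})" by (intro card_mono) auto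
  also have "\<dots> \<le> d" using card_image_le[of "{..<d}" "\<lambda>i. a ^ i"] by simp
  finally have "?N \<le> d" by (simp add: card_Diff_subset)
  hence dN: "d = ?N" using dle by simp
  show ?thesis
  proof
    assume "a ^ m = 1"
    hence "a ^ (m mod d) = 1" using red by simp
    hence "m mod d = 0" using dmin[of "m mod d"] d by auto
    thus "?N dvd m" using dN by auto
  next
    assume "?N dvd m"
    then obtain k where "m = ?N * k" by auto
    thus "a ^ m = 1" using aN by (simp add: power_mult)
  qed
qed


lemma sum_bij_UNIV:
  fixes g :: "'a::finite \<Rightarrow> 'b::comm_monoid_add"
  assumes "\<And>x. f (h x) = x" "\<And>x. h (f x) = x"
  shows "(\<Sum>x\<in>UNIV. g (f x)) = (\<Sum>x\<in>UNIV. g x)"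
  by (rule sum.reindex_bij_witness[of _ h f]) (use assms in auto)

lemma ff_trace_0: "ff_trace (0::'a::{finite,field}) = 0"
proof -
  have "CHAR('a) > 0" using ff_CHAR_prime[where 'a='a] by (simp add: prime_gt_0_nat)
  thus ?thesis unfolding ff_trace_def by (simp add: power_0_left)
qed

lemma ff_trace_nat_0: "ff_trace_nat (0::'a::{finite,field}) = 0"
proof -
  have p0: "0 < CHAR('a)" using ff_CHAR_prime[where 'a='a] by (simp add: prime_gt_0_nat)
  have "of_nat (ff_trace_nat (0::'a)) = (of_nat 0 :: 'a)" using ff_trace_nat[of "0::'a"] ff_trace_0 by simp
  thus ?thesis using ff_trace_nat[of "0::'a"] p0 of_nat_inj_CHAR by blast
qed

lemma theta_0: "add_char \<zeta> (0::'a::{finite,field}) = 1"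
  by (simp add: add_char_def ff_trace_nat_0)

lemma theta_add:
  assumes "prim_root_unity CHAR('a::{finite,field}) \<zeta>"
  shows "add_char \<zeta> (x + y :: 'a) = add_char \<zeta> x * add_char \<zeta> y"
proof -
  have z: "\<zeta> ^ CHAR('a) = 1" using assms by (simp add: prim_root_unity_def)
  have "(of_nat (ff_trace_nat (x + y)) :: 'a) = of_nat (ff_trace_nat x + ff_trace_nat y)"
    using ff_trace_nat[of "x+y"] ff_trace_nat[of x] ff_trace_nat[of y] ff_trace_add[of x y] by simp
  hence "\<zeta> ^ ff_trace_nat (x + y) = \<zeta> ^ (ff_trace_nat x + ff_trace_nat y)"
    by (rule pow_eq_of_nat_CHAR[OF z])
  thus ?thesis by (simp add: add_char_def power_add)
qed

lemma theta_sum: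
  assumes "prim_root_unity CHAR('a::{finite,field}) \<zeta>"
  shows "(\<Sum>x\<in>UNIV. add_char \<zeta> (x::'a)) = 0"
proof -
  obtain x0 :: 'a where x0: "ff_trace x0 \<noteq> 0" using ff_trace_nonzero by blast
  have "ff_trace_nat x0 > 0"
  proof (rule ccontr)
    assume "\<not> ff_trace_nat x0 > 0"
    hence "ff_trace_nat x0 = 0" by simp
    thus False using x0 ff_trace_nat[of x0] by simp
  qed
  moreover have "ff_trace_nat x0 < CHAR('a)" using ff_trace_nat[of x0] by simp
  ultimately have ne: "add_char \<zeta> x0 \<noteq> 1" using assms
    by (simp add: add_char_def prim_root_unity_def)
  let ?S = "\<Sum>x\<in>UNIV. add_char \<zeta> (x::'a)"
  have "?S = (\<Sum>x\<in>UNIV. add_char \<zeta> (x + x0))"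
    by (rule sum_bij_UNIV[symmetric, where f="\<lambda>x. x + x0" and h="\<lambda>x. x - x0" and g="add_char \<zeta>"]) auto
  also have "\<dots> = add_char \<zeta> x0 * ?S"
    by (simp add: theta_add[OF assms] sum_distrib_left mult.commute)
  finally have "(1 - add_char \<zeta> x0) * ?S = 0" by (simp add: algebra_simps)
  thus ?thesis using ne by simp
qed

lemma theta_sum_mult:
  assumes "prim_root_unity CHAR('a::{finite,field}) \<zeta>"
  shows "(\<Sum>x\<in>UNIV. add_char \<zeta> (c * x :: 'a)) = (if c = 0 then of_nat CARD('a) else 0)"
proof (cases "c = 0")
  case True thus ?thesis by (simp add: theta_0)
next
  case False
  have "(\<Sum>x\<in>UNIV. add_char \<zeta> (c * x :: 'a)) = (\<Sum>x\<in>UNIV. add_char \<zeta> (x::'a))"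
    using sum_bij_UNIV[where f="\<lambda>x. c * x" and h="\<lambda>x. x / c" and g="add_char \<zeta>"] False by simp
  thus ?thesis using theta_sum[OF assms] False by simp
qed

definition mc :: "('a::field \<Rightarrow> complex) \<Rightarrow> bool" where
  "mc \<chi> \<longleftrightarrow> \<chi> 0 = 0 \<and> \<chi> 1 = 1 \<and> (\<forall>x y. \<chi> (x * y) = \<chi> x * \<chi> y)"

definition jac :: "('a::{finite,field} \<Rightarrow> complex) \<Rightarrow> ('a \<Rightarrow> complex) \<Rightarrow> complex" where
  "jac \<chi> \<psi> = (\<Sum>x\<in>UNIV. \<chi> x * \<psi> (1 - x))"

lemma mc_mult: "mc \<chi> \<Longrightarrow> \<chi> (x * y) = \<chi> x * \<chi> y"
  by (simp add: mc_def)

lemma mc_0: "mc \<chi> \<Longrightarrow> \<chi> 0 = 0"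
  by (simp add: mc_def)

lemma mc_1: "mc \<chi> \<Longrightarrow> \<chi> 1 = 1"
  by (simp add: mc_def)

lemma gauss_prod_expand:
  assumes prim: "prim_root_unity CHAR('a::{finite,field}) \<zeta>"
  shows "gauss_sum \<zeta> (\<chi> :: 'a \<Rightarrow> complex) * gauss_sum \<zeta> \<psi> =
    (\<Sum>x\<in>UNIV. \<Sum>y\<in>UNIV. \<chi> x * \<psi> y * add_char \<zeta> (x + y))"
  unfolding gauss_sum_def sum_product
  by (intro sum.cong refl) (simp add: theta_add[OF prim] algebra_simps)

lemma gauss_mult_general:
  assumes prim: "prim_root_unity CHAR('a::{finite,field}) \<zeta>"
    and mx: "mc (\<chi> :: 'a \<Rightarrow> complex)" and mp: "mc \<psi>"
  shows "gauss_sum \<zeta> \<chi> * gauss_sum \<zeta> \<psi> =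
    jac \<chi> \<psi> * gauss_sum \<zeta> (\<lambda>x. \<chi> x * \<psi> x) + \<psi> (-1) * (\<Sum>x\<in>UNIV. \<chi> x * \<psi> x)"
proof -
  let ?th = "add_char \<zeta> :: 'a \<Rightarrow> complex"
  have inner: "(\<Sum>x\<in>UNIV. \<chi> x * \<psi> (s - x)) =
     \<chi> s * \<psi> s * jac \<chi> \<psi> + (if s = 0 then \<psi> (-1) * (\<Sum>x\<in>UNIV. \<chi> x * \<psi> x) else 0)" for s
  proof (cases "s = 0")
    case True
    have "(\<Sum>x\<in>UNIV. \<chi> x * \<psi> (s - x)) = (\<Sum>x\<in>UNIV. \<chi> x * (\<psi> (-1) * \<psi> x))"
      using True mc_mult[OF mp, of "-1"] by (intro sum.cong refl) (metis minus_diff_eq diff_zero mult_minus1)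
    thus ?thesis using True mc_0[OF mx] by (simp add: sum_distrib_left algebra_simps)
  next
    case False
    have "(\<Sum>x\<in>UNIV. \<chi> x * \<psi> (s - x)) = (\<Sum>u\<in>UNIV. \<chi> (s * u) * \<psi> (s - s * u))"
      by (rule sum_bij_UNIV[symmetric, where f="\<lambda>x. s * x" and h="\<lambda>x. x / s" and g="\<lambda>x. \<chi> x * \<psi> (s - x)"]) (use False in auto)
    also have "\<dots> = (\<Sum>u\<in>UNIV. \<chi> s * \<psi> s * (\<chi> u * \<psi> (1 - u)))"
    proof (intro sum.cong refl)
      fix u
      have "s - s * u = s * (1 - u)" by (simp add: algebra_simps)
      thus "\<chi> (s * u) * \<psi> (s - s * u) = \<chi> s * \<psi> s * (\<chi> u * \<psi> (1 - u))"
        using mc_mult[OF mx] mc_mult[OF mp] by simp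
    qed
    finally show ?thesis using False by (simp add: jac_def sum_distrib_left)
  qed
  have "gauss_sum \<zeta> \<chi> * gauss_sum \<zeta> \<psi> = (\<Sum>x\<in>UNIV. \<Sum>y\<in>UNIV. \<chi> x * \<psi> y * ?th (x + y))"
    by (rule gauss_prod_expand[OF prim])
  also have "\<dots> = (\<Sum>x\<in>UNIV. \<Sum>s\<in>UNIV. \<chi> x * \<psi> (s - x) * ?th s)"
  proof (rule sum.cong[OF refl])
    fix x
    show "(\<Sum>y\<in>UNIV. \<chi> x * \<psi> y * ?th (x + y)) = (\<Sum>s\<in>UNIV. \<chi> x * \<psi> (s - x) * ?th s)"
      using sum_bij_UNIV[where f="\<lambda>s. s - x" and h="\<lambda>y. y + x" and g = "\<lambda>y. \<chi> x * \<psi> y * ?th (x + y)"] by simp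
  qed
  also have "\<dots> = (\<Sum>s\<in>UNIV. ?th s * (\<Sum>x\<in>UNIV. \<chi> x * \<psi> (s - x)))"
    by (subst sum.swap) (simp add: sum_distrib_left algebra_simps)
  also have "\<dots> = (\<Sum>s\<in>UNIV. ?th s * (\<chi> s * \<psi> s) * jac \<chi> \<psi> +
        (if s = 0 then \<psi> (-1) * (\<Sum>x\<in>UNIV. \<chi> x * \<psi> x) else 0))"
    by (intro sum.cong refl) (auto simp: inner algebra_simps theta_0)
  also have "\<dots> = jac \<chi> \<psi> * gauss_sum \<zeta> (\<lambda>x. \<chi> x * \<psi> x) + \<psi> (-1) * (\<Sum>x\<in>UNIV. \<chi> x * \<psi> x)"
    by (simp add: sum.distrib gauss_sum_def sum_distrib_left sum_distrib_right algebra_simps)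
  finally show ?thesis .
qed

lemma gauss_inverse_pair:
  assumes prim: "prim_root_unity CHAR('a::{finite,field}) \<zeta>"
    and mx: "mc (\<chi> :: 'a \<Rightarrow> complex)" and mp: "mc \<psi>"
    and inv: "\<And>x. x \<noteq> 0 \<Longrightarrow> \<chi> x * \<psi> x = 1"
    and s0: "(\<Sum>x\<in>UNIV. \<psi> x) = 0"
  shows "gauss_sum \<zeta> \<chi> * gauss_sum \<zeta> \<psi> = of_nat CARD('a) * \<psi> (-1)"
proof -
  let ?th = "add_char \<zeta> :: 'a \<Rightarrow> complex"
  have row: "(\<Sum>y\<in>UNIV. \<chi> x * \<psi> y * ?th (x + y)) = (\<Sum>z\<in>UNIV. \<psi> z * ?th ((1 + z) * x))" for x
  proof (cases "x = 0")
    case True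
    thus ?thesis using s0 mc_0[OF mx] by (simp add: theta_0)
  next
    case False
    have "(\<Sum>y\<in>UNIV. \<chi> x * \<psi> y * ?th (x + y)) = (\<Sum>z\<in>UNIV. \<chi> x * \<psi> (x * z) * ?th (x + x * z))"
      by (rule sum_bij_UNIV[symmetric, where f="\<lambda>z. x * z" and h="\<lambda>y. y / x" and g="\<lambda>y. \<chi> x * \<psi> y * ?th (x + y)"]) (use False in auto)
    also have "\<dots> = (\<Sum>z\<in>UNIV. \<psi> z * ?th ((1 + z) * x))"
    proof (intro sum.cong refl)
      fix z
      have "\<chi> x * \<psi> (x * z) = (\<chi> x * \<psi> x) * \<psi> z" using mc_mult[OF mp] by simp
      also have "\<dots> = \<psi> z" using inv[OF False] by simp
      finally show "\<chi> x * \<psi> (x * z) * ?th (x + x * z) = \<psi> z * ?th ((1 + z) * x)"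
        by (simp add: algebra_simps)
    qed
    finally show ?thesis .
  qed
  have "gauss_sum \<zeta> \<chi> * gauss_sum \<zeta> \<psi> = (\<Sum>x\<in>UNIV. \<Sum>y\<in>UNIV. \<chi> x * \<psi> y * ?th (x + y))"
    by (rule gauss_prod_expand[OF prim])
  also have "\<dots> = (\<Sum>x\<in>UNIV. \<Sum>z\<in>UNIV. \<psi> z * ?th ((1 + z) * x))" by (simp only: row)
  also have "\<dots> = (\<Sum>z\<in>UNIV. \<psi> z * (\<Sum>x\<in>UNIV. ?th ((1 + z) * x)))"
    by (subst sum.swap) (simp add: sum_distrib_left)
  also have "\<dots> = (\<Sum>z\<in>UNIV. if z = -1 then \<psi> z * of_nat CARD('a) else 0)"
    by (intro sum.cong refl) (auto simp: theta_sum_mult[OF prim] add_eq_0_iff)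
  also have "\<dots> = of_nat CARD('a) * \<psi> (-1)" by (simp add: sum.delta')
  finally show ?thesis .
qed


lemma pow_mod_unity:
  fixes z :: "'b::comm_monoid_mult"
  assumes "z ^ n = 1"
  shows "z ^ m = z ^ (m mod n)"
proof -
  have "z ^ m = z ^ (m mod n + n * (m div n))" by (simp only: mod_mult_div_eq)
  also have "\<dots> = z ^ (m mod n)" by (simp only: power_add power_mult assms power_one mult_1_right)
  finally show ?thesis .
qed

locale gs =
  fixes T :: "'a::{finite,field} \<Rightarrow> complex" and \<zeta> :: complex
  assumes oddp: "odd CHAR('a)" and q4: "CARD('a) mod 4 = 1"
    and prim: "prim_root_unity CHAR('a) \<zeta>" and gen: "char_generator T"
begin

definition ga :: 'a where "ga = (SOME a. a \<noteq> 0 \<and> (\<forall>x. x \<noteq> 0 \<longrightarrow> (\<exists>i. x = a ^ i)))"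

lemma ga: "ga \<noteq> 0" "\<And>x. x \<noteq> 0 \<Longrightarrow> \<exists>i. x = ga ^ i"
proof -
  have "ga \<noteq> 0 \<and> (\<forall>x. x \<noteq> 0 \<longrightarrow> (\<exists>i. x = ga ^ i))"
    unfolding ga_def by (rule someI_ex) (rule ff_generator)
  thus "ga \<noteq> 0" "\<And>x. x \<noteq> 0 \<Longrightarrow> \<exists>i. x = ga ^ i" by auto
qed

lemma N_ge: "CARD('a) - 1 \<ge> 4"
proof -
  have "card {0, 1::'a} \<le> CARD('a)" by (intro card_mono) auto
  hence "CARD('a) \<ge> 2" by simp
  thus ?thesis using q4 by presburger
qed

lemma ga_pow_1: "ga ^ m = 1 \<longleftrightarrow> (CARD('a) - 1) dvd m"
  by (rule ff_gen_order[OF ga(1) ga(2)])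

lemma ga_pow_eq: "ga ^ m = ga ^ n \<longleftrightarrow> m mod (CARD('a) - 1) = n mod (CARD('a) - 1)"
proof -
  have gen: "ga ^ m = ga ^ n \<longleftrightarrow> m mod (CARD('a) - 1) = n mod (CARD('a) - 1)" if "m \<le> n" for m n
  proof -
    have "ga ^ n = ga ^ m * ga ^ (n - m)" using that by (simp flip: power_add)
    hence "ga ^ m = ga ^ n \<longleftrightarrow> ga ^ (n - m) = 1" using ga(1) by auto
    also have "\<dots> \<longleftrightarrow> (CARD('a) - 1) dvd (n - m)" by (rule ga_pow_1)
    also have "\<dots> \<longleftrightarrow> m mod (CARD('a) - 1) = n mod (CARD('a) - 1)"
      using mod_eq_dvd_iff_nat[OF that, of "CARD('a) - 1"] by auto
    finally show ?thesis .
  qed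
  show ?thesis
  proof (cases "m \<le> n")
    case True thus ?thesis by (rule gen)
  next
    case False thus ?thesis using gen[of n m] by auto
  qed
qed

lemma T_mc: "mc T"
  using gen unfolding char_generator_def mult_char_def mc_def
  by (metis mult_zero_left mult_zero_right)

lemma T_pow: "T (x ^ i) = T x ^ i"
  by (induct i) (simp_all add: mc_1[OF T_mc] mc_mult[OF T_mc])

lemma T_N: "x \<noteq> 0 \<Longrightarrow> T x ^ (CARD('a) - 1) = 1"
  using T_pow[of x "CARD('a) - 1"] ff_pow_card_minus1[of x] mc_1[OF T_mc] by simp

definition w :: complex where "w = T ga"

lemma w_N: "w ^ (CARD('a) - 1) = 1"
  unfolding w_def using T_N[OF ga(1)] .

lemma w_prim: "w ^ k = 1 \<longleftrightarrow> (CARD('a) - 1) dvd k"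
proof
  let ?N = "CARD('a) - 1"
  have N0: "?N > 0" using N_ge by simp
  define \<omega> where "\<omega> = cis (2 * pi / real ?N)"
  have om_pow: "\<omega> ^ k = cis (2 * pi * real k / real ?N)" for k
    by (simp add: \<omega>_def DeMoivre mult_ac)
  have om_N: "\<omega> ^ ?N = 1" using N0 by (simp add: om_pow complex_eq_iff)
  have om_prim: "\<omega> ^ k = 1 \<Longrightarrow> ?N dvd k" for k
  proof -
    assume "\<omega> ^ k = 1"
    hence "\<omega> ^ (k mod ?N) = \<omega> ^ 0" using pow_mod_unity[OF om_N, of k] by simp
    hence "k mod ?N = 0" using inj_onD[OF bij_betw_imp_inj_on[OF bij_betw_roots_unity[OF N0]], of "k mod ?N" 0]
      N0 by (simp add: om_pow)
    thus "?N dvd k" by auto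
  qed
  define ind where "ind x = (SOME i. x = ga ^ i)" for x
  have ind: "x \<noteq> 0 \<Longrightarrow> x = ga ^ ind x" for x unfolding ind_def by (rule someI_ex) (rule ga(2))
  define \<chi> where "\<chi> x = (if x = 0 then 0 else \<omega> ^ ind x)" for x
  have om_eq: "\<omega> ^ m = \<omega> ^ n" if "ga ^ m = ga ^ n" for m n
  proof -
    have "m mod ?N = n mod ?N" using that ga_pow_eq by simp
    thus ?thesis using pow_mod_unity[OF om_N, of m] pow_mod_unity[OF om_N, of n] by simp
  qed
  have "mult_char \<chi>" unfolding mult_char_def
  proof (intro conjI allI impI)
    show "\<chi> 0 = 0" by (simp add: \<chi>_def)
    have "ga ^ ind 1 = ga ^ 0" using ind[of 1] by simp
    hence "\<omega> ^ ind 1 = \<omega> ^ 0" by (rule om_eq)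
    thus "\<chi> 1 = 1" unfolding \<chi>_def by simp
  next
    fix x y :: 'a assume xy: "x \<noteq> 0" "y \<noteq> 0"
    have "ga ^ ind (x * y) = ga ^ (ind x + ind y)"
      using ind[of "x*y"] ind[of x] ind[of y] xy by (simp add: power_add)
    hence "\<omega> ^ ind (x * y) = \<omega> ^ (ind x + ind y)" by (rule om_eq)
    thus "\<chi> (x * y) = \<chi> x * \<chi> y" using xy by (simp add: \<chi>_def power_add)
  qed
  then obtain j where j: "\<chi> = char_pow T j" using gen unfolding char_generator_def by blast
  have "ga ^ ind ga = ga ^ 1" using ind[OF ga(1)] by simp
  hence "\<omega> ^ ind ga = \<omega> ^ 1" by (rule om_eq)
  hence "\<chi> ga = \<omega>" using ga(1) by (simp add: \<chi>_def)
  hence omw: "\<omega> = w ^ j" using j ga(1) by (simp add: char_pow_def w_def)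
  assume "w ^ k = 1"
  hence "(w ^ k) ^ j = 1" by simp
  hence "\<omega> ^ k = 1" unfolding omw by (simp only: power_mult[symmetric] mult.commute)
  thus "?N dvd k" by (rule om_prim)
next
  assume "(CARD('a) - 1) dvd k"
  then obtain m where "k = (CARD('a) - 1) * m" by auto
  thus "w ^ k = 1" using w_N by (simp add: power_mult)
qed

lemma T_ga_pow: "T (ga ^ i) = w ^ i"
  by (simp add: T_pow w_def)

end


context gs
begin


abbreviation X where "X j \<equiv> char_pow T j"

lemma X_mc: "mc (X j)"
  unfolding mc_def char_pow_def
  by (auto simp: mc_mult[OF T_mc] mc_1[OF T_mc] power_mult_distrib)

lemma X_mult: "X j x * X k x = X (j + k) x"
  by (simp add: char_pow_def power_add)

lemma X_mod: "j mod (CARD('a) - 1) = k mod (CARD('a) - 1) \<Longrightarrow> X j = X k"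
proof
  fix x assume jk: "j mod (CARD('a) - 1) = k mod (CARD('a) - 1)"
  show "X j x = X k x"
  proof (cases "x = 0")
    case False
    have "T x ^ j = T x ^ k"
      using pow_mod_unity[OF T_N[OF False], of j] pow_mod_unity[OF T_N[OF False], of k] jk by simp
    thus ?thesis using False by (simp add: char_pow_def)
  qed (simp add: char_pow_def)
qed

lemma X_ga: "X j (ga ^ i) = w ^ (i * j)"
  using ga(1) by (simp add: char_pow_def T_ga_pow power_mult)

lemma sum_nonzero: "(\<Sum>x\<in>UNIV. f x) = f 0 + (\<Sum>i<(CARD('a) - 1). f (ga ^ i))"
proof -
  have "(\<Sum>x\<in>UNIV. f x) = f 0 + (\<Sum>x\<in>UNIV - {0}. f x)"
    by (rule sum.remove) auto
  also have "(\<Sum>x\<in>UNIV - {0}. f x) = (\<Sum>i<(CARD('a) - 1). f (ga ^ i))"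
  proof -
    have inj: "inj_on (\<lambda>i. ga ^ i) {..<(CARD('a) - 1)}"
      by (auto simp: inj_on_def ga_pow_eq)
    have img: "(\<lambda>i. ga ^ i) ` {..<(CARD('a) - 1)} = UNIV - {0}"
    proof
      show "(\<lambda>i. ga ^ i) ` {..<(CARD('a) - 1)} \<subseteq> UNIV - {0}" using ga(1) by auto
      show "UNIV - {0} \<subseteq> (\<lambda>i. ga ^ i) ` {..<(CARD('a) - 1)}"
      proof
        fix x :: 'a assume "x \<in> UNIV - {0}"
        then obtain i where i: "x = ga ^ i" using ga(2) by blast
        have "ga ^ i = ga ^ (i mod (CARD('a) - 1))" using ga_pow_eq by simp
        moreover have "i mod (CARD('a) - 1) < (CARD('a) - 1)" using N_ge by simp
        ultimately show "x \<in> (\<lambda>i. ga ^ i) ` {..<(CARD('a) - 1)}" using i by blast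
      qed
    qed
    show ?thesis using sum.reindex[OF inj, of f] img by simp
  qed
  finally show ?thesis .
qed

lemma X_sum: "(\<Sum>x\<in>UNIV. X j x) = (if (CARD('a) - 1) dvd j then of_nat (CARD('a) - 1) else 0)"
proof -
  have "(\<Sum>x\<in>UNIV. X j x) = (\<Sum>i<(CARD('a) - 1). (w ^ j) ^ i)"
  proof -
    have z: "X j 0 = 0" by (simp add: char_pow_def)
    have e: "w ^ (i * j) = (w ^ j) ^ i" for i by (metis power_mult mult.commute)
    show ?thesis by (subst sum_nonzero) (simp only: z X_ga e add_0_left)
  qed
  also have "\<dots> = (if (CARD('a) - 1) dvd j then of_nat (CARD('a) - 1) else 0)"
  proof (cases "(CARD('a) - 1) dvd j")
    case True
    hence "w ^ j = 1" using w_prim by simp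
    thus ?thesis using True by simp
  next
    case False
    hence ne: "w ^ j \<noteq> 1" using w_prim by simp
    have "(w ^ j) ^ (CARD('a) - 1) = 1" using w_N by (metis power_mult mult.commute power_one)
    thus ?thesis using False geometric_sum[OF ne, of "CARD('a) - 1"] by simp
  qed
  finally show ?thesis .
qed

lemma X_triv: "(CARD('a) - 1) dvd j \<Longrightarrow> X j x = (if x = 0 then 0 else 1)"
  using X_mod[of j 0] by (auto simp: char_pow_def)

lemma gauss_triv:
  assumes "(CARD('a) - 1) dvd j"
  shows "gauss_sum \<zeta> (X j) = -1"
proof -
  have "gauss_sum \<zeta> (X j) = (\<Sum>x::'a\<in>UNIV. add_char \<zeta> x - (if x = 0 then add_char \<zeta> x else 0))"
    unfolding gauss_sum_def by (intro sum.cong refl) (auto simp: X_triv[OF assms])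
  also have "\<dots> = - 1"
    by (simp add: sum_subtractf theta_sum[OF prim] theta_0)
  finally show ?thesis .
qed

lemma X_m1: "X j (-1) * X j (-1) = 1"
  using mc_mult[OF X_mc, of j "-1" "-1"] mc_1[OF X_mc, of j] by simp

lemma gauss_pair:
  assumes "(CARD('a) - 1) dvd (j + k)" "\<not> (CARD('a) - 1) dvd k"
  shows "gauss_sum \<zeta> (X j) * gauss_sum \<zeta> (X k) = of_nat CARD('a) * X k (-1)"
proof (rule gauss_inverse_pair[OF prim X_mc X_mc])
  fix x :: 'a assume "x \<noteq> 0"
  thus "X j x * X k x = 1" using X_mult[of j x k] X_triv[OF assms(1)] by simp
next
  show "(\<Sum>x\<in>UNIV. X k x) = 0" using X_sum[of k] assms(2) by simp
qed

lemma gauss_nz: "gauss_sum \<zeta> (X j) \<noteq> 0"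
proof (cases "(CARD('a) - 1) dvd j")
  case True thus ?thesis using gauss_triv by simp
next
  case False
  define N where "N = CARD('a) - 1"
  have FN: "\<not> N dvd j" using False N_def by simp
  define k where "k = N - j mod N"
  have N0: "N > 0" using N_ge N_def by simp
  have jm1: "j mod N \<noteq> 0" using FN by (simp add: dvd_eq_mod_eq_0)
  have jm: "j mod N < N" "j mod N > 0" using N0 jm1 by auto
  have "j + k = N * (j div N) + N" unfolding k_def using jm
    by (metis add.assoc add.commute le_add_diff_inverse less_imp_le_nat mod_mult_div_eq)
  also have "\<dots> = N * (j div N + 1)" by (simp add: algebra_simps)
  finally have d: "N dvd (j + k)" by simp
  have nd: "\<not> N dvd k"
  proof
    assume "N dvd k"
    moreover have "k > 0" "k < N" using jm unfolding k_def by auto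
    ultimately show False using dvd_imp_le by fastforce
  qed
  have "gauss_sum \<zeta> (X j) * gauss_sum \<zeta> (X k) \<noteq> 0"
    unfolding gauss_pair[OF d[unfolded N_def] nd[unfolded N_def]] using X_m1[of k] by auto
  thus ?thesis by auto
qed

end


locale gs2 = gs +
  fixes t :: nat
  assumes t_def: "t = (CARD('a) - 1) div 4"
begin

lemma N4t: "CARD('a) - 1 = 4 * t"
  using q4 t_def by presburger

lemma t_pos: "t > 0"
  using N4t N_ge by simp

lemma w2t: "w ^ (2 * t) = -1"
proof -
  have "(w ^ (2 * t)) ^ 2 = 1"
    using w_N N4t by (simp flip: power_mult)
  moreover have "w ^ (2 * t) \<noteq> 1"
  proof
    assume "w ^ (2 * t) = 1"
    hence "4 * t dvd 2 * t" using w_prim N4t by simp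
    thus False using t_pos by (auto dest: dvd_imp_le)
  qed
  ultimately show ?thesis by (simp add: power2_eq_1_iff)
qed

lemma phi_ga: "X (2 * t) (ga ^ i) = (-1) ^ i"
proof -
  have "X (2 * t) (ga ^ i) = w ^ (i * (2 * t))" by (rule X_ga)
  also have "\<dots> = (w ^ (2 * t)) ^ i" by (metis power_mult mult.commute)
  finally show ?thesis using w2t by simp
qed

lemma two_nz: "(2::'a) \<noteq> 0"
proof
  assume "(2::'a) = 0"
  hence "(of_nat 2 :: 'a) = 0" by simp
  hence "CHAR('a) dvd 2" by (simp only: of_nat_eq_0_iff_char_dvd)
  hence "CHAR('a) \<le> 2" by (auto dest: dvd_imp_le)
  moreover have "CHAR('a) \<ge> 2" using ff_CHAR_prime[where 'a='a] prime_ge_2_nat by blast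
  ultimately have "CHAR('a) = 2" by simp
  thus False using oddp by simp
qed

lemma card_sq: "complex_of_nat (card {s::'a. s ^ 2 = b}) = 1 + X (2 * t) b"
proof (cases "b = 0")
  case True
  have "{s::'a. s ^ 2 = b} = {0}" using True by auto
  thus ?thesis using True by (simp add: char_pow_def)
next
  case False
  then obtain i where i: "b = ga ^ i" using ga(2) by blast
  show ?thesis
  proof (cases "even i")
    case True
    then obtain m where m: "i = 2 * m" by auto
    define c where "c = ga ^ m"
    have cb: "c ^ 2 = b" unfolding c_def i m by (simp add: power_mult mult.commute flip: power_mult)
    have c0: "c \<noteq> 0" unfolding c_def using ga(1) by simp
    have iff: "s ^ 2 = b \<longleftrightarrow> s = c \<or> s = -c" for s :: 'a
    proof
      assume "s ^ 2 = b"
      hence "s ^ 2 = c ^ 2" using cb by simp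
      hence "(s - c) * (s + c) = 0" by (simp add: algebra_simps power2_eq_square)
      thus "s = c \<or> s = -c" by (auto simp: add_eq_0_iff)
    next
      assume "s = c \<or> s = -c"
      thus "s ^ 2 = b" using cb by auto
    qed
    have "{s::'a. s ^ 2 = b} = {c, -c}" using iff by auto
    moreover have "c \<noteq> -c"
    proof
      assume "c = -c"
      hence "2 * c = 0" by simp
      thus False using two_nz c0 by simp
    qed
    ultimately have "card {s::'a. s ^ 2 = b} = 2" by simp
    moreover have "X (2 * t) b = 1" using phi_ga[of i] True i by simp
    ultimately show ?thesis by simp
  next
    case odd: False
    have "{s::'a. s ^ 2 = b} = {}"
    proof (rule ccontr)
      assume "{s::'a. s ^ 2 = b} \<noteq> {}"
      then obtain s :: 'a where s: "s ^ 2 = b" by auto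
      hence "s \<noteq> 0" using False by auto
      then obtain m where "s = ga ^ m" using ga(2) by blast
      hence "ga ^ (2 * m) = ga ^ i" using s i by (simp add: power_mult mult.commute flip: power_mult)
      hence e: "(2 * m) mod (4 * t) = i mod (4 * t)" using ga_pow_eq N4t by simp
      have "(2 * m) mod (4 * t) mod 2 = (2 * m) mod 2" by (simp add: mod_mod_cancel)
      moreover have "i mod (4 * t) mod 2 = i mod 2" by (simp add: mod_mod_cancel)
      ultimately have "i mod 2 = 0" using e by simp
      thus False using odd by (simp add: even_iff_mod_2_eq_zero)
    qed
    moreover have "X (2 * t) b = -1" using phi_ga[of i] odd i by simp
    ultimately show ?thesis by simp
  qed
qed

lemma sum_sq: "(\<Sum>s\<in>UNIV. f (s ^ 2 :: 'a)) = (\<Sum>b\<in>UNIV. f b * (1 + X (2 * t) b))"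
proof -
  have "(\<Sum>s\<in>UNIV. f (s ^ 2 :: 'a)) = (\<Sum>b\<in>UNIV. \<Sum>s\<in>{x\<in>UNIV. x ^ 2 = b}. f (s ^ 2))"
    by (rule sum.group[symmetric]) auto
  also have "\<dots> = (\<Sum>b\<in>UNIV. \<Sum>s\<in>{x. x ^ 2 = b}. f b)" by (intro sum.cong refl) auto
  also have "\<dots> = (\<Sum>b\<in>UNIV. f b * (1 + X (2 * t) b))"
    by (intro sum.cong refl) (simp add: card_sq mult.commute)
  finally show ?thesis .
qed

lemma jac4:
  assumes m: "mc \<psi>" and s0: "(\<Sum>x\<in>UNIV. \<psi> x) = 0"
  shows "\<psi> 4 * jac \<psi> \<psi> = jac \<psi> (X (2 * t))"
proof -
  have "\<psi> 4 * jac \<psi> \<psi> = (\<Sum>x\<in>UNIV. \<psi> (1 - (2 * x - 1) ^ 2))"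
    unfolding jac_def sum_distrib_left
  proof (intro sum.cong refl)
    fix x :: 'a
    have "1 - (2 * x - 1) ^ 2 = 4 * (x * (1 - x))" by (simp add: algebra_simps power2_eq_square)
    thus "\<psi> 4 * (\<psi> x * \<psi> (1 - x)) = \<psi> (1 - (2 * x - 1) ^ 2)" using mc_mult[OF m] by simp
  qed
  also have "\<dots> = (\<Sum>s\<in>UNIV. \<psi> (1 - s ^ 2))"
    using sum_bij_UNIV[where f="\<lambda>x. 2 * x - 1" and h="\<lambda>s. (s + 1) / 2" and g="\<lambda>s. \<psi> (1 - s ^ 2)"]
      two_nz by (simp add: field_simps)
  also have "\<dots> = (\<Sum>b\<in>UNIV. \<psi> (1 - b) * (1 + X (2 * t) b))"
    by (rule sum_sq)
  also have "\<dots> = (\<Sum>b\<in>UNIV. \<psi> (1 - b)) + (\<Sum>b\<in>UNIV. \<psi> (1 - b) * X (2 * t) b)"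
    by (simp add: algebra_simps sum.distrib)
  also have "(\<Sum>b\<in>UNIV. \<psi> (1 - b)) = 0"
    using sum_bij_UNIV[where f="\<lambda>b. 1 - b" and h="\<lambda>b. 1 - b" and g=\<psi>] s0 by simp
  also have "(\<Sum>b\<in>UNIV. \<psi> (1 - b) * X (2 * t) b) = jac \<psi> (X (2 * t))"
    unfolding jac_def
    using sum_bij_UNIV[where f="\<lambda>b. 1 - b" and h="\<lambda>b. 1 - b" and g="\<lambda>x. \<psi> x * X (2 * t) (1 - x)"] by simp
  finally show ?thesis by simp
qed

end


context gs2
begin

lemma four_nz: "(4::'a) \<noteq> 0"
proof -
  have "(4::'a) = 2 * 2" by simp
  thus ?thesis using two_nz by (metis no_zero_divisors)
qed

lemma one_neq_m1: "(1::'a) \<noteq> -1"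
proof
  assume "(1::'a) = -1"
  hence "(2::'a) = 0" by (metis add_eq_0_iff one_add_one)
  thus False using two_nz by simp
qed

lemma T_m1_sq: "T (-1) ^ 2 = 1"
proof -
  have "T ((-1) * (-1)) = T (-1) * T (-1)" by (rule mc_mult[OF T_mc])
  hence "T (-1) * T (-1) = 1" by (simp add: mc_1[OF T_mc])
  thus ?thesis by (simp add: power2_eq_square)
qed

lemma phi_m1: "X (2 * t) (-1) = 1"
  using T_m1_sq by (simp add: char_pow_def power_mult)

lemma X_triv_nz: "(CARD('a) - 1) dvd j \<Longrightarrow> x \<noteq> 0 \<Longrightarrow> X j x = 1"
  using X_triv by simp

lemma N_dvd_4t: "(CARD('a) - 1) dvd (4 * t * k)"
  using N4t by simp

lemma N_ndvd_2t: "\<not> (CARD('a) - 1) dvd (2 * t)"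
proof
  assume "(CARD('a) - 1) dvd (2 * t)"
  hence "4 * t \<le> 2 * t" using N4t t_pos by (auto dest: dvd_imp_le)
  thus False using t_pos by simp
qed

lemma g_phi_sq: "gauss_sum \<zeta> (X (2 * t)) ^ 2 = of_nat CARD('a)"
proof -
  have "(CARD('a) - 1) dvd (2 * t + 2 * t)" using N4t by simp
  from gauss_pair[OF this N_ndvd_2t] show ?thesis by (simp add: power2_eq_square phi_m1)
qed

lemma jac_triv_phi:
  assumes "(CARD('a) - 1) dvd j"
  shows "jac (X j) (X (2 * t)) = -1"
proof -
  have "jac (X j) (X (2 * t)) = (\<Sum>x::'a\<in>UNIV. X (2 * t) (1 - x) - (if x = 0 then X (2 * t) (1 - x) else 0))"
    unfolding jac_def by (intro sum.cong refl) (auto simp: X_triv[OF assms])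
  also have "\<dots> = (\<Sum>x::'a\<in>UNIV. X (2 * t) (1 - x)) - 1"
    by (simp add: sum_subtractf mc_1[OF X_mc])
  also have "(\<Sum>x::'a\<in>UNIV. X (2 * t) (1 - x)) = (\<Sum>x::'a\<in>UNIV. X (2 * t) x)"
    using sum_bij_UNIV[where f="\<lambda>b. 1 - b" and h="\<lambda>b. 1 - b" and g="X (2 * t)"] by simp
  also have "\<dots> = 0" using X_sum[of "2 * t"] N_ndvd_2t by simp
  finally show ?thesis by simp
qed

lemma X_mult_fun: "(\<lambda>x. X a x * X b x) = X (a + b)"
  by (rule ext) (rule X_mult)

lemma jac_phi_phi: "jac (X (2 * t)) (X (2 * t)) = -1"
proof -
  have d: "(CARD('a) - 1) dvd (2 * t + 2 * t)" using N4t by simp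
  have e1: "gauss_sum \<zeta> (X (2 * t)) * gauss_sum \<zeta> (X (2 * t)) =
      jac (X (2 * t)) (X (2 * t)) * gauss_sum \<zeta> (X (2 * t + 2 * t)) +
      X (2 * t) (-1) * (\<Sum>x\<in>UNIV. X (2 * t + 2 * t) x)"
    using gauss_mult_general[OF prim X_mc X_mc, of "2 * t" "2 * t"] unfolding X_mult_fun .
  have e2: "gauss_sum \<zeta> (X (2 * t)) * gauss_sum \<zeta> (X (2 * t)) = of_nat CARD('a)"
    using g_phi_sq by (simp only: power2_eq_square)
  have e3: "(\<Sum>x\<in>UNIV. X (2 * t + 2 * t) x) = of_nat (CARD('a) - 1)"
    using X_sum[of "2 * t + 2 * t"] d by (simp only: if_P)
  define M where "M = (of_nat (CARD('a) - 1) :: complex)"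
  have a1: "(of_nat CARD('a) :: complex) = jac (X (2 * t)) (X (2 * t)) * (-1) + 1 * M"
    using e1 unfolding e2 e3 gauss_triv[OF d] phi_m1 M_def .
  have a2: "(of_nat CARD('a) :: complex) = M + 1"
  proof -
    have "CARD('a) = (CARD('a) - 1) + 1" using N_ge by simp
    hence "(of_nat CARD('a) :: complex) = of_nat ((CARD('a) - 1) + 1)" by (rule arg_cong)
    thus ?thesis unfolding M_def by (simp only: of_nat_add of_nat_1)
  qed
  have "jac (X (2 * t)) (X (2 * t)) * (-1) + 1 * M = M + 1" using a1 a2 by simp
  hence "jac (X (2 * t)) (X (2 * t)) + 1 = 0" by (simp add: algebra_simps)
  thus ?thesis by (metis eq_neg_iff_add_eq_0)
qed

lemma gauss_X_mult:
  assumes "\<not> (CARD('a) - 1) dvd (a + b)"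
  shows "gauss_sum \<zeta> (X a) * gauss_sum \<zeta> (X b) = jac (X a) (X b) * gauss_sum \<zeta> (X (a + b))"
  using gauss_mult_general[OF prim X_mc X_mc, of a b] X_sum[of "a + b"] assms
  by (simp add: X_mult_fun X_mult)

lemma X_lam:
  assumes lam: "lam ^ 4 = (1::'a)"
  shows "X (4 * j) (4 * lam) = X (4 * j) 4"
proof -
  have l0: "lam \<noteq> 0" using lam by auto
  have "T lam ^ 4 = 1" using T_pow[of lam 4] lam mc_1[OF T_mc] by simp
  hence "X (4 * j) lam = 1" using l0 by (simp add: char_pow_def power_mult)
  thus ?thesis using mc_mult[OF X_mc, of "4 * j" 4 lam] by simp
qed

lemma X_pow4: "X (k * j) 4 = X j 4 ^ k"
  using four_nz by (simp add: char_pow_def power_mult mult.commute)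

definition AA :: "'a \<Rightarrow> nat \<Rightarrow> complex" where
  "AA lam j = gauss_sum \<zeta> (X j) ^ 2 * gauss_sum \<zeta> (X (2 * t + j)) ^ 2
      / gauss_sum \<zeta> (X (4 * j)) * X (4 * j) (4 * lam)"

lemma AA_gen:
  assumes lam: "lam ^ 4 = (1::'a)" and nd: "\<not> t dvd j"
  shows "AA lam j = of_nat CARD('a) * jac (X (2 * j)) (X (2 * t))"
proof -
  let ?g = "gauss_sum \<zeta>" and ?N = "CARD('a) - 1" and ?Q = "of_nat CARD('a) :: complex"
  let ?c = "X j 4"
  have n1: "\<not> ?N dvd j" using nd N4t by (metis dvd_mult_right)
  have n2: "\<not> ?N dvd (j + j)"
  proof
    assume "?N dvd (j + j)"
    moreover have "CARD('a) - 1 = 2 * (2 * t)" using N4t by simp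
    moreover have "j + j = 2 * j" by simp
    ultimately have "2 * (2 * t) dvd 2 * j" by metis
    hence "2 * t dvd j" by (simp only: nat_mult_dvd_cancel_disj) simp
    thus False using nd by (metis dvd_mult_right)
  qed
  have n4: "\<not> ?N dvd (2 * j + 2 * j)"
  proof
    assume "?N dvd (2 * j + 2 * j)"
    hence "4 * t dvd 4 * j" using N4t by simp
    hence "t dvd j" by simp
    thus False using nd by simp
  qed
  have n3: "\<not> ?N dvd (j + 2 * t)"
  proof
    assume "?N dvd (j + 2 * t)"
    hence "t dvd (j + 2 * t)" using N4t by (metis dvd_mult_right mult.assoc mult.commute)
    hence "t dvd j" by (simp add: dvd_add_left_iff)
    thus False using nd by simp
  qed
  have n2': "\<not> ?N dvd (2 * j)" using n2 by (simp add: mult_2)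
  have i: "?g (X j) * ?g (X j) = jac (X j) (X j) * ?g (X (2 * j))"
    using gauss_X_mult[OF n2] by (simp add: mult_2)
  have ii: "?g (X j) * ?g (X (2 * t)) = jac (X j) (X (2 * t)) * ?g (X (j + 2 * t))"
    using gauss_X_mult[OF n3] .
  have iii: "?c * jac (X j) (X j) = jac (X j) (X (2 * t))"
    using jac4[OF X_mc] X_sum[of j] n1 by simp
  have "?g (X j) * (?c * ?g (X j) * ?g (X (j + 2 * t))) = ?g (X j) * (?g (X (2 * t)) * ?g (X (2 * j)))"
  proof -
    have "?g (X j) * (?c * ?g (X j) * ?g (X (j + 2 * t))) = ?c * (?g (X j) * ?g (X j)) * ?g (X (j + 2 * t))"
      by (simp add: algebra_simps)
    also have "\<dots> = (?c * jac (X j) (X j)) * ?g (X (2 * j)) * ?g (X (j + 2 * t))"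
      by (simp only: i mult.assoc)
    also have "\<dots> = jac (X j) (X (2 * t)) * ?g (X (2 * j)) * ?g (X (j + 2 * t))"
      by (simp only: iii)
    also have "\<dots> = jac (X j) (X (2 * t)) * ?g (X (j + 2 * t)) * ?g (X (2 * j))"
      by (simp only: mult_ac)
    also have "\<dots> = ?g (X j) * (?g (X (2 * t)) * ?g (X (2 * j)))"
      by (simp only: ii[symmetric] mult.assoc)
    finally show ?thesis .
  qed
  hence iv: "?c * ?g (X j) * ?g (X (j + 2 * t)) = ?g (X (2 * t)) * ?g (X (2 * j))"
    using gauss_nz[of j] by simp
  have vi: "?g (X (2 * j)) * ?g (X (2 * j)) = jac (X (2 * j)) (X (2 * j)) * ?g (X (4 * j))"
    using gauss_X_mult[OF n4] by simp
  have vii: "X (2 * j) 4 * jac (X (2 * j)) (X (2 * j)) = jac (X (2 * j)) (X (2 * t))"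
    using jac4[OF X_mc] X_sum[of "2 * j"] n2' by simp
  have c2: "X (2 * j) 4 = ?c ^ 2" by (rule X_pow4)
  have c4: "X (4 * j) 4 = ?c ^ 4" by (rule X_pow4)
  have num: "?g (X j) ^ 2 * ?g (X (2 * t + j)) ^ 2 * ?c ^ 4
      = ?Q * jac (X (2 * j)) (X (2 * t)) * ?g (X (4 * j))"
  proof -
    have L1: "(a::complex) ^ 2 * b ^ 2 * c ^ 4 = (c * a * b) ^ 2 * c ^ 2" for a b c
      by (simp add: power2_eq_square eval_nat_numeral)
    have L2: "((x::complex) * y) ^ 2 * z = x ^ 2 * (y * y) * z" for x y z
      by (simp add: power2_eq_square)
    have L3: "(q::complex) * (jj * g4) * z = q * (z * jj) * g4" for q jj g4 z
      by (simp add: mult_ac)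
    have e: "2 * t + j = j + 2 * t" by simp
    have "?g (X j) ^ 2 * ?g (X (2 * t + j)) ^ 2 * ?c ^ 4
        = (?c * ?g (X j) * ?g (X (j + 2 * t))) ^ 2 * ?c ^ 2"
      unfolding e by (rule L1)
    also have "\<dots> = (?g (X (2 * t)) * ?g (X (2 * j))) ^ 2 * X (2 * j) 4"
      by (simp only: iv c2)
    also have "\<dots> = ?g (X (2 * t)) ^ 2 * (?g (X (2 * j)) * ?g (X (2 * j))) * X (2 * j) 4"
      by (rule L2)
    also have "\<dots> = ?Q * (jac (X (2 * j)) (X (2 * j)) * ?g (X (4 * j))) * X (2 * j) 4"
      by (simp only: g_phi_sq vi)
    also have "\<dots> = ?Q * (X (2 * j) 4 * jac (X (2 * j)) (X (2 * j))) * ?g (X (4 * j))"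
      by (rule L3)
    also have "\<dots> = ?Q * jac (X (2 * j)) (X (2 * t)) * ?g (X (4 * j))"
      by (simp only: vii)
    finally show ?thesis .
  qed
  have "AA lam j = ?g (X j) ^ 2 * ?g (X (2 * t + j)) ^ 2 * ?c ^ 4 / ?g (X (4 * j))"
    unfolding AA_def X_lam[OF lam] c4 by simp
  also have "\<dots> = ?Q * jac (X (2 * j)) (X (2 * t))"
    unfolding num using gauss_nz[of "4 * j"] by simp
  finally show ?thesis .
qed

end


context gs2
begin

lemma lam_nz: "lam ^ 4 = (1::'a) \<Longrightarrow> 4 * lam \<noteq> 0"
  using four_nz by auto

lemma N_ndvd_3t: "\<not> (CARD('a) - 1) dvd (3 * t)"
proof
  assume "(CARD('a) - 1) dvd (3 * t)"
  hence "4 * t \<le> 3 * t" using N4t t_pos by (auto dest: dvd_imp_le)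
  thus False using t_pos by simp
qed

lemma g_t_3t: "gauss_sum \<zeta> (X t) ^ 2 * gauss_sum \<zeta> (X (3 * t)) ^ 2 = of_nat CARD('a) ^ 2"
proof -
  have d: "(CARD('a) - 1) dvd (t + 3 * t)" using N4t by simp
  have "gauss_sum \<zeta> (X t) * gauss_sum \<zeta> (X (3 * t)) = of_nat CARD('a) * X (3 * t) (-1)"
    by (rule gauss_pair[OF d N_ndvd_3t])
  hence "(gauss_sum \<zeta> (X t) * gauss_sum \<zeta> (X (3 * t))) ^ 2 = of_nat CARD('a) ^ 2 * (X (3 * t) (-1) * X (3 * t) (-1))"
    by (simp add: power2_eq_square mult_ac)
  thus ?thesis using X_m1[of "3 * t"] by (simp add: power_mult_distrib)
qed

lemma AA_0: "lam ^ 4 = (1::'a) \<Longrightarrow> AA lam 0 = - of_nat CARD('a)"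
  unfolding AA_def using gauss_triv[of 0] g_phi_sq X_triv_nz[of 0 "4 * lam"] lam_nz
  by simp

lemma AA_2t: "lam ^ 4 = (1::'a) \<Longrightarrow> AA lam (2 * t) = - of_nat CARD('a)"
proof -
  assume lam: "lam ^ 4 = (1::'a)"
  have d1: "(CARD('a) - 1) dvd (2 * t + 2 * t)" using N4t by simp
  have d2: "(CARD('a) - 1) dvd (4 * (2 * t))" using N4t by simp
  show ?thesis unfolding AA_def
    using gauss_triv[OF d1] gauss_triv[OF d2] g_phi_sq X_triv_nz[OF d2 lam_nz[OF lam]] by simp
qed

lemma AA_t: "lam ^ 4 = (1::'a) \<Longrightarrow> AA lam t = - (of_nat CARD('a) ^ 2)"
proof -
  assume lam: "lam ^ 4 = (1::'a)"
  have d2: "(CARD('a) - 1) dvd (4 * t)" using N4t by simp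
  have e: "2 * t + t = 3 * t" by simp
  show ?thesis unfolding AA_def e
    using gauss_triv[OF d2] g_t_3t X_triv_nz[OF d2 lam_nz[OF lam]] by simp
qed

lemma AA_3t: "lam ^ 4 = (1::'a) \<Longrightarrow> AA lam (3 * t) = - (of_nat CARD('a) ^ 2)"
proof -
  assume lam: "lam ^ 4 = (1::'a)"
  have d2: "(CARD('a) - 1) dvd (4 * (3 * t))" using N4t by simp
  have "(2 * t + 3 * t) mod (CARD('a) - 1) = t mod (CARD('a) - 1)"
  proof -
    have "2 * t + 3 * t = t + 4 * t" by simp
    thus ?thesis using N4t by simp
  qed
  hence e: "X (2 * t + 3 * t) = X t" by (rule X_mod)
  show ?thesis unfolding AA_def e
    using gauss_triv[OF d2] g_t_3t X_triv_nz[OF d2 lam_nz[OF lam]] by (simp add: mult.commute)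
qed

lemma AA_all:
  assumes lam: "lam ^ 4 = (1::'a)" and j: "j < CARD('a) - 1"
  shows "AA lam j = of_nat CARD('a) * jac (X (2 * j)) (X (2 * t))
     + (if j = t then of_nat CARD('a) - of_nat CARD('a) ^ 2 else 0)
     + (if j = 3 * t then of_nat CARD('a) - of_nat CARD('a) ^ 2 else 0)"
proof (cases "t dvd j")
  case False
  moreover have "j \<noteq> t" "j \<noteq> 3 * t" using False by auto
  ultimately show ?thesis using AA_gen[OF lam False] by simp
next
  case True
  then obtain m where m: "j = t * m" by auto
  have "m < 4" using j m N4t t_pos by simp
  hence "m = 0 \<or> m = 1 \<or> m = 2 \<or> m = 3" by auto
  moreover {
    assume "m = 0"
    hence "j = 0" using m by simp
    moreover have "jac (X 0) (X (2 * t)) = -1" by (rule jac_triv_phi) simp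
    ultimately have ?thesis using AA_0[OF lam] t_pos by simp
  }
  moreover {
    assume "m = 1"
    hence "j = t" using m by simp
    moreover have "t \<noteq> 3 * t" using t_pos by simp
    ultimately have ?thesis using AA_t[OF lam] jac_phi_phi by (simp add: algebra_simps)
  }
  moreover {
    assume "m = 2"
    hence "j = 2 * t" using m by simp
    moreover have "jac (X (2 * (2 * t))) (X (2 * t)) = -1"
    proof (rule jac_triv_phi)
      show "(CARD('a) - 1) dvd (2 * (2 * t))" using N4t by simp
    qed
    moreover have "2 * t \<noteq> t" "2 * t \<noteq> 3 * t" using t_pos by auto
    ultimately have ?thesis using AA_2t[OF lam] by simp
  }
  moreover {
    assume "m = 3"
    hence "j = 3 * t" using m by simp
    moreover have "X (2 * (3 * t)) = X (2 * t)"
    proof (rule X_mod)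
      have "2 * (3 * t) = 2 * t + 4 * t" by simp
      thus "2 * (3 * t) mod (CARD('a) - 1) = 2 * t mod (CARD('a) - 1)" using N4t by simp
    qed
    moreover have "3 * t \<noteq> t" using t_pos by simp
    ultimately have ?thesis using AA_3t[OF lam] jac_phi_phi by (simp add: algebra_simps)
  }
  ultimately show ?thesis by blast
qed

end


context gs2
begin

lemma T_eq_1: "y \<noteq> 0 \<Longrightarrow> T y = 1 \<Longrightarrow> y = 1"
proof -
  assume y: "y \<noteq> 0" "T y = 1"
  then obtain i where i: "y = ga ^ i" using ga(2) by blast
  hence "w ^ i = 1" using y T_ga_pow by simp
  hence "(CARD('a) - 1) dvd i" using w_prim by simp
  hence "ga ^ i = 1" using ga_pow_1 by simp
  thus "y = 1" using i by simp
qed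

lemma sq_eq_1: "(x::'a) ^ 2 = 1 \<longleftrightarrow> x = 1 \<or> x = -1"
proof
  assume "x ^ 2 = 1"
  hence "(x - 1) * (x + 1) = 0" by (simp add: algebra_simps power2_eq_square)
  hence "x - 1 = 0 \<or> x + 1 = 0" by simp
  thus "x = 1 \<or> x = -1" by (metis eq_neg_iff_add_eq_0 right_minus_eq)
qed auto

lemma inner_sum:
  "(\<Sum>j<CARD('a) - 1. X (2 * j) x) =
     (if x = 1 then of_nat (CARD('a) - 1) else 0) + (if x = -1 then of_nat (CARD('a) - 1) else 0)"
proof (cases "x = 0")
  case True thus ?thesis by (simp add: char_pow_def)
next
  case False
  let ?z = "T (x ^ 2)"
  have e: "X (2 * j) x = ?z ^ j" for j using False by (simp add: char_pow_def T_pow power_mult)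
  show ?thesis
  proof (cases "x = 1 \<or> x = -1")
    case True
    hence "x ^ 2 = 1" using sq_eq_1 by simp
    hence "?z = 1" using mc_1[OF T_mc] by simp
    thus ?thesis using True one_neq_m1 by (auto simp: e)
  next
    case nt: False
    hence "x ^ 2 \<noteq> 1" using sq_eq_1 by simp
    moreover have "x ^ 2 \<noteq> 0" using False by simp
    ultimately have z1: "?z \<noteq> 1" using T_eq_1 by blast
    have "?z ^ (CARD('a) - 1) = 1" using T_N[of "x ^ 2"] False by simp
    hence "(\<Sum>j<CARD('a) - 1. ?z ^ j) = 0" using geometric_sum[OF z1, of "CARD('a) - 1"] by simp
    thus ?thesis using nt by (simp add: e)
  qed
qed

lemma jac_sum:
  "(\<Sum>j<CARD('a) - 1. jac (X (2 * j)) (X (2 * t))) = of_nat (CARD('a) - 1) * X (2 * t) 2"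
proof -
  let ?M = "of_nat (CARD('a) - 1) :: complex"
  have "(\<Sum>j<CARD('a) - 1. jac (X (2 * j)) (X (2 * t)))
      = (\<Sum>x\<in>UNIV. X (2 * t) (1 - x) * (\<Sum>j<CARD('a) - 1. X (2 * j) x))"
    unfolding jac_def by (subst sum.swap) (simp add: sum_distrib_left mult.commute)
  also have "\<dots> = (\<Sum>x\<in>UNIV. (if x = 1 then X (2 * t) (1 - x) * ?M else 0)
       + (if x = -1 then X (2 * t) (1 - x) * ?M else 0))"
    by (intro sum.cong refl) (unfold inner_sum, auto simp: distrib_left)
  also have "\<dots> = X (2 * t) 0 * ?M + X (2 * t) 2 * ?M"
    by (simp add: sum.distrib)
  also have "\<dots> = ?M * X (2 * t) 2" by (simp add: char_pow_def)
  finally show ?thesis .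
qed

lemma ga_2t: "ga ^ (2 * t) = -1"
proof -
  have "(ga ^ (2 * t)) ^ 2 = ga ^ (4 * t)" by (simp flip: power_mult)
  also have "\<dots> = 1" using ga_pow_1 N4t by simp
  finally have "ga ^ (2 * t) = 1 \<or> ga ^ (2 * t) = -1" using sq_eq_1 by simp
  moreover have "ga ^ (2 * t) \<noteq> 1" using ga_pow_1 N_ndvd_2t by simp
  ultimately show ?thesis by simp
qed

lemma phi2: "X (2 * t) 2 = X t (-1)"
proof -
  define i0 where "i0 = ga ^ t"
  have i0sq: "i0 * i0 = -1" unfolding i0_def using ga_2t by (simp add: mult_2 power_add)
  have xt: "X t (-1) = (-1) ^ t"
  proof -
    have "X t (-1) = X t (ga ^ (2 * t))" using ga_2t by simp
    also have "\<dots> = w ^ (2 * t * t)" by (rule X_ga)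
    also have "\<dots> = (w ^ (2 * t)) ^ t" by (simp add: power_mult)
    finally show ?thesis using w2t by simp
  qed
  have pi0: "X (2 * t) i0 = (-1) ^ t" unfolding i0_def by (rule phi_ga)
  have nz: "1 + i0 \<noteq> 0"
  proof
    assume "1 + i0 = 0"
    hence "i0 = -1" by (simp add: add_eq_0_iff)
    hence "i0 * i0 = 1" by simp
    thus False using i0sq one_neq_m1 by simp
  qed
  have sq: "(1 + i0) * (1 + i0) = 2 * i0" using i0sq by (simp add: algebra_simps)
  have "X (2 * t) (1 + i0) * X (2 * t) (1 + i0) = 1"
  proof -
    have "X (2 * t) (1 + i0) * X (2 * t) (1 + i0) = X (2 * t + 2 * t) (1 + i0)" by (rule X_mult)
    also have "\<dots> = 1" using N4t nz by (intro X_triv_nz) simp_all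
    finally show ?thesis .
  qed
  hence "X (2 * t) 2 * X (2 * t) i0 = 1"
    using mc_mult[OF X_mc, of "2 * t" "1 + i0" "1 + i0"] mc_mult[OF X_mc, of "2 * t" 2 i0] sq by simp
  hence "X (2 * t) 2 * (-1) ^ t * (-1) ^ t = (-1) ^ t" using pi0 by simp
  moreover have "(-1::complex) ^ t * (-1) ^ t = 1" by (simp flip: power_mult_distrib)
  ultimately have "X (2 * t) 2 = (-1) ^ t" by (metis mult.assoc mult_1_right)
  thus ?thesis using xt by simp
qed

lemma main_gs2:
  assumes lam: "lam ^ 4 = (1::'a)"
  shows "3 / (of_nat (CARD('a)) - 1) *
      (\<Sum>j=0..CARD('a) - 2. AA lam j)
    = - 6 * of_nat (CARD('a)) + 3 * of_nat (CARD('a)) * X t (- 1)"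
proof -
  let ?Q = "of_nat CARD('a) :: complex" and ?M = "of_nat (CARD('a) - 1) :: complex"
  have rng: "{0..CARD('a) - 2} = {..<CARD('a) - 1}"
  proof -
    have "CARD('a) - 1 = Suc (CARD('a) - 2)" using N_ge by simp
    thus ?thesis by (simp only: atLeast0AtMost lessThan_Suc_atMost)
  qed
  have t1: "t < CARD('a) - 1" "3 * t < CARD('a) - 1" using N4t t_pos by simp_all
  have "(\<Sum>j=0..CARD('a) - 2. AA lam j) = (\<Sum>j<CARD('a) - 1. AA lam j)" by (simp only: rng)
  also have "\<dots> = (\<Sum>j<CARD('a) - 1. ?Q * jac (X (2 * j)) (X (2 * t))
     + (if j = t then ?Q - ?Q ^ 2 else 0) + (if j = 3 * t then ?Q - ?Q ^ 2 else 0))"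
    by (intro sum.cong refl) (simp add: AA_all[OF lam])
  also have "\<dots> = ?Q * (\<Sum>j<CARD('a) - 1. jac (X (2 * j)) (X (2 * t))) + (?Q - ?Q ^ 2) + (?Q - ?Q ^ 2)"
    using t1 by (simp add: sum.distrib sum_distrib_left)
  also have "\<dots> = ?Q * ?M * X t (-1) + 2 * (?Q - ?Q ^ 2)"
    unfolding jac_sum phi2 by (simp add: algebra_simps)
  finally have S: "(\<Sum>j=0..CARD('a) - 2. AA lam j) = ?Q * ?M * X t (-1) + 2 * (?Q - ?Q ^ 2)" .
  have QM: "?Q = ?M + 1"
  proof -
    have "CARD('a) = (CARD('a) - 1) + 1" using N_ge by simp
    hence "?Q = of_nat ((CARD('a) - 1) + 1)" by (rule arg_cong)
    thus ?thesis by (simp only: of_nat_add of_nat_1)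
  qed
  have den: "of_nat CARD('a) - 1 = ?M" using QM by simp
  have M0: "?M \<noteq> 0" using N_ge by simp
  show ?thesis unfolding S den unfolding QM using M0
    by (simp add: field_simps power2_eq_square)
qed

end


theorem corollary4p7:
  fixes T :: "'a::{finite,field} \<Rightarrow> complex" and \<zeta> :: complex and lam :: 'a and t :: nat
  assumes "odd CHAR('a)"
    and "CARD('a) mod 4 = 1"
    and "t = (CARD('a) - 1) div 4"
    and "prim_root_unity CHAR('a) \<zeta>"
    and "char_generator T"
    and "lam ^ 4 = 1"
  shows "3 / (of_nat (CARD('a)) - 1) *
      (\<Sum>j=0..CARD('a) - 2.
         gauss_sum \<zeta> (char_pow T j) ^ 2 * gauss_sum \<zeta> (char_pow T (2 * t + j)) ^ 2
           / gauss_sum \<zeta> (char_pow T (4 * j)) * char_pow T (4 * j) (4 * lam))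
    = - 6 * of_nat (CARD('a)) + 3 * of_nat (CARD('a)) * char_pow T t (- 1)"
proof -
  interpret gs2 T \<zeta> t
    by unfold_locales (use assms in auto)
  show ?thesis using main_gs2[OF assms(6)] unfolding AA_def .
qed


end
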